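(* Let $\mathbb{F}$ be a field, $\prec$ a term order on the monomials of $\mathbb{F}[x_1,\ldots,x_n]$, $\mathcal{F}\subseteq\mathbb{F}^n$ a finite set, $h\in\mathbb{F}^n\setminus\mathcal{F}$, and $\mathcal{T}:=\mathcal{F}\cup\{h\}$. Let $\{g_1,\ldots,g_s\}$ be the reduced Gröbner basis of $I(\mathcal{F})$ with respect to $\prec$, indexed so that $\mathrm{lm}_\prec(g_1)\prec\cdots\prec\mathrm{lm}_\prec(g_s)$, and let $i:=\min\{j:g_j(h)\ne0\}$. Let $\chi_h:\mathcal{T}\to\mathbb{F}$ be given by $\chi_h(h)=1$ and $\chi_h(f)=0$ for $f\in\mathcal{F}$. Then $\chi_h(t)=\frac{1}{g_i(h)}g_i(t)$ for all $t\in\mathcal{T}$, and $\frac{1}{g_i(h)}g_i$ is a linear combination of monomials in $\mathrm{Sm}(\prec,\mathcal{T})$; i.e. it is the unique expansion of $\chi_h$ as a linear combination of standard monomials of $I(\mathcal{T})$.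
   Context: $I(\mathcal{F})$ is the ideal of polynomials vanishing on $\mathcal{F}$; $\mathrm{Sm}(\prec,\mathcal{T})$ is the set of monomials that are not leading monomials of nonzero elements of $I(\mathcal{T})$. A reduced Gröbner basis is a Gröbner basis whose elements have leading coefficient 1 and none of whose monomials is divisible by the leading monomial of another element. *)

theory Defs
  imports Main "HOL-Library.Poly_Mapping"
begin

text \<open>Multivariate polynomials over a field in the variables indexed by a finite type 'v
  (so n = CARD of that type).\<close>

type_synonym 'v monomial = "'v \<Rightarrow>\<^sub>0 nat"
type_synonym ('v, 'a) mpoly = "'v monomial \<Rightarrow>\<^sub>0 'a"

definition eval_mono :: "'v::finite monomial \<Rightarrow> ('v \<Rightarrow> 'a::comm_semiring_1) \<Rightarrow> 'a" where
  "eval_mono m x = (\<Prod>v\<in>UNIV. x v ^ Poly_Mapping.lookup m v)"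

definition eval_poly :: "('v::finite, 'a::comm_semiring_1) mpoly \<Rightarrow> ('v \<Rightarrow> 'a) \<Rightarrow> 'a" where
  "eval_poly p x = (\<Sum>m\<in>Poly_Mapping.keys p. Poly_Mapping.lookup p m * eval_mono m x)"

definition smult_poly :: "'a::comm_semiring_1 \<Rightarrow> ('v, 'a) mpoly \<Rightarrow> ('v, 'a) mpoly" where
  "smult_poly c p = Poly_Mapping.map (\<lambda>a. c * a) p"

definition mono_dvd :: "'v monomial \<Rightarrow> 'v monomial \<Rightarrow> bool" where
  "mono_dvd m1 m2 \<longleftrightarrow> (\<forall>v. Poly_Mapping.lookup m1 v \<le> Poly_Mapping.lookup m2 v)"

definition term_order :: "('v monomial \<Rightarrow> 'v monomial \<Rightarrow> bool) \<Rightarrow> bool" where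
  "term_order le \<longleftrightarrow>
     (\<forall>a. le a a) \<and>
     (\<forall>a b. le a b \<and> le b a \<longrightarrow> a = b) \<and>
     (\<forall>a b c. le a b \<and> le b c \<longrightarrow> le a c) \<and>
     (\<forall>a b. le a b \<or> le b a) \<and>
     (\<forall>a. le 0 a) \<and>
     (\<forall>a b c. le a b \<longrightarrow> le (a + c) (b + c))"

definition lm :: "('v monomial \<Rightarrow> 'v monomial \<Rightarrow> bool) \<Rightarrow> ('v, 'a::zero) mpoly \<Rightarrow> 'v monomial" where
  "lm le p = (THE m. m \<in> Poly_Mapping.keys p \<and> (\<forall>m'\<in>Poly_Mapping.keys p. le m' m))"

definition lc :: "('v monomial \<Rightarrow> 'v monomial \<Rightarrow> bool) \<Rightarrow> ('v, 'a::zero) mpoly \<Rightarrow> 'a" where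
  "lc le p = Poly_Mapping.lookup p (lm le p)"

definition vanishing_ideal :: "('v::finite \<Rightarrow> 'a::comm_semiring_1) set \<Rightarrow> ('v, 'a) mpoly set" where
  "vanishing_ideal S = {p. \<forall>x\<in>S. eval_poly p x = 0}"

definition is_groebner_basis ::
  "('v monomial \<Rightarrow> 'v monomial \<Rightarrow> bool) \<Rightarrow> ('v, 'a::zero) mpoly set \<Rightarrow> ('v, 'a) mpoly set \<Rightarrow> bool" where
  "is_groebner_basis le G I \<longleftrightarrow>
     finite G \<and> G \<subseteq> I \<and> 0 \<notin> G \<and>
     (\<forall>p\<in>I. p \<noteq> 0 \<longrightarrow> (\<exists>g\<in>G. mono_dvd (lm le g) (lm le p)))"

definition is_reduced_groebner_basis ::
  "('v monomial \<Rightarrow> 'v monomial \<Rightarrow> bool) \<Rightarrow> ('v, 'a::{zero,one}) mpoly set \<Rightarrow> ('v, 'a) mpoly set \<Rightarrow> bool" where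
  "is_reduced_groebner_basis le G I \<longleftrightarrow>
     is_groebner_basis le G I \<and>
     (\<forall>g\<in>G. lc le g = 1) \<and>
     (\<forall>g\<in>G. \<forall>g'\<in>G. g \<noteq> g' \<longrightarrow> (\<forall>m\<in>Poly_Mapping.keys g. \<not> mono_dvd (lm le g') m))"

definition standard_monomials ::
  "('v monomial \<Rightarrow> 'v monomial \<Rightarrow> bool) \<Rightarrow> ('v::finite \<Rightarrow> 'a::comm_semiring_1) set \<Rightarrow> 'v monomial set" where
  "standard_monomials le T =
     {m. \<not> (\<exists>p\<in>vanishing_ideal T. p \<noteq> 0 \<and> lm le p = m)}"

end

theory Submission
  imports Defs "HOL-Library.Ramsey"
begin

lemma to_refl: "term_order le \<Longrightarrow> le a a" unfolding term_order_def by blast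
lemma to_antisym: "term_order le \<Longrightarrow> le a b \<Longrightarrow> le b a \<Longrightarrow> a = b" unfolding term_order_def by blast
lemma to_trans: "term_order le \<Longrightarrow> le a b \<Longrightarrow> le b c \<Longrightarrow> le a c" unfolding term_order_def by blast
lemma to_total: "term_order le \<Longrightarrow> le a b \<or> le b a" unfolding term_order_def by blast
lemma to_zero: "term_order le \<Longrightarrow> le 0 a" unfolding term_order_def by blast
lemma to_add: "term_order le \<Longrightarrow> le a b \<Longrightarrow> le (c + a) (c + b)"
  unfolding term_order_def by (metis add.commute)

lemma finite_max_ex:
  assumes "finite S" "S \<noteq> {}" "\<And>a b. R a b \<or> R b a" "\<And>a b c. R a b \<Longrightarrow> R b c \<Longrightarrow> R a c"
  shows "\<exists>x\<in>S. \<forall>y\<in>S. R y x"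
  using assms(1,2)
proof (induction S rule: finite_ne_induct)
  case (singleton x) then show ?case using assms(3) by blast
next
  case (insert x F)
  then obtain m where m: "m \<in> F" "\<forall>y\<in>F. R y m" by blast
  show ?case
  proof (cases "R x m")
    case True then show ?thesis using m by blast
  next
    case False then have "R m x" using assms(3) by blast
    then show ?thesis using m assms(4) assms(3) by (metis insert_iff)
  qed
qed

lemma lm_prop:
  assumes "term_order le" "p \<noteq> 0"
  shows "lm le p \<in> Poly_Mapping.keys p \<and> (\<forall>m\<in>Poly_Mapping.keys p. le m (lm le p))"
proof -
  have "Poly_Mapping.keys p \<noteq> {}" using assms(2) by simp
  then obtain m where m: "m \<in> Poly_Mapping.keys p" "\<forall>m'\<in>Poly_Mapping.keys p. le m' m"
    using finite_max_ex[of "Poly_Mapping.keys p" le] to_total[OF assms(1)] to_trans[OF assms(1)]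
    by (metis finite_keys)
  have "lm le p = m" unfolding lm_def
    apply (rule the_equality) using m apply blast
    using m to_antisym[OF assms(1)] by blast
  then show ?thesis using m by simp
qed

lemma lm_in: "term_order le \<Longrightarrow> p \<noteq> 0 \<Longrightarrow> lm le p \<in> Poly_Mapping.keys p"
  using lm_prop by blast
lemma lm_max: "term_order le \<Longrightarrow> m \<in> Poly_Mapping.keys p \<Longrightarrow> le m (lm le p)"
  by (metis lm_prop empty_iff keys_zero)

lemma lm_less:
  assumes "term_order le" "q \<noteq> 0" "\<forall>m\<in>Poly_Mapping.keys q. le m M" "Poly_Mapping.lookup q M = 0"
  shows "le (lm le q) M \<and> lm le q \<noteq> M"
  using lm_in[OF assms(1,2)] assms(3,4) by (auto simp: in_keys_iff)

lemma mono_dvd_le: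
  assumes "term_order le" "mono_dvd a b"
  shows "le a b" "b = a + (b - a)"
proof -
  show eq: "b = a + (b - a)" using assms(2) unfolding mono_dvd_def poly_mapping_eq_iff
    by (auto simp: lookup_add lookup_minus fun_eq_iff)
  have "le (a + 0) (a + (b - a))" by (rule to_add[OF assms(1) to_zero[OF assms(1)]])
  then show "le a b" using eq by simp
qed


lemma eval_superset:
  assumes "finite S" "Poly_Mapping.keys p \<subseteq> S"
  shows "eval_poly p x = (\<Sum>m\<in>S. Poly_Mapping.lookup p m * eval_mono m x)"
  unfolding eval_poly_def
  by (rule sum.mono_neutral_left) (use assms in \<open>auto simp: in_keys_iff\<close>)

lemma eval_add: "eval_poly (p + q) x = eval_poly p x + eval_poly q x"
proof -
  let ?S = "Poly_Mapping.keys p \<union> Poly_Mapping.keys q"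
  have "eval_poly (p + q) x = (\<Sum>m\<in>?S. Poly_Mapping.lookup (p+q) m * eval_mono m x)"
    by (rule eval_superset) (auto simp: keys_add)
  also have "\<dots> = (\<Sum>m\<in>?S. Poly_Mapping.lookup p m * eval_mono m x) + (\<Sum>m\<in>?S. Poly_Mapping.lookup q m * eval_mono m x)"
    by (simp add: lookup_add distrib_right sum.distrib)
  also have "\<dots> = eval_poly p x + eval_poly q x"
    using eval_superset[of ?S p x] eval_superset[of ?S q x] by simp
  finally show ?thesis .
qed

lemma eval_diff: "eval_poly (p - q) x = eval_poly p x - (eval_poly q x :: 'a::comm_ring_1)"
proof -
  let ?S = "Poly_Mapping.keys p \<union> Poly_Mapping.keys q"
  have "eval_poly (p - q) x = (\<Sum>m\<in>?S. Poly_Mapping.lookup (p-q) m * eval_mono m x)"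
    by (rule eval_superset) (auto simp: keys_diff)
  also have "\<dots> = (\<Sum>m\<in>?S. Poly_Mapping.lookup p m * eval_mono m x) - (\<Sum>m\<in>?S. Poly_Mapping.lookup q m * eval_mono m x)"
    by (simp add: lookup_minus left_diff_distrib sum_subtractf)
  also have "\<dots> = eval_poly p x - eval_poly q x"
    using eval_superset[of ?S p x] eval_superset[of ?S q x] by simp
  finally show ?thesis .
qed

lemma eval_zero[simp]: "eval_poly 0 x = 0" by (simp add: eval_poly_def)

lemma eval_single: "eval_poly (Poly_Mapping.single m c) x = c * eval_mono m x"
  by (simp add: eval_poly_def)

lemma eval_sum: "eval_poly (\<Sum>i\<in>A. f i) x = (\<Sum>i\<in>A. eval_poly (f i) x)"
  by (induction A rule: infinite_finite_induct) (auto simp: eval_add)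

lemma poly_sum: "p = (\<Sum>m\<in>Poly_Mapping.keys p. Poly_Mapping.single m (Poly_Mapping.lookup p m))"
proof -
  have "Poly_Mapping.lookup (\<Sum>m\<in>Poly_Mapping.keys p. Poly_Mapping.single m (Poly_Mapping.lookup p m)) k
      = Poly_Mapping.lookup p k" for k
  proof -
    have "Poly_Mapping.lookup (\<Sum>m\<in>Poly_Mapping.keys p. Poly_Mapping.single m (Poly_Mapping.lookup p m)) k
      = (\<Sum>m\<in>Poly_Mapping.keys p. if m = k then Poly_Mapping.lookup p m else 0)"
      by (simp add: lookup_sum lookup_single when_def)
    also have "\<dots> = Poly_Mapping.lookup p k" by (simp add: sum.delta in_keys_iff)
    finally show ?thesis .
  qed
  then show ?thesis by (simp add: poly_mapping_eq_iff fun_eq_iff)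
qed

lemma eval_mono_zero[simp]: "eval_mono 0 x = 1" by (simp add: eval_mono_def)

lemma eval_mono_add: "eval_mono (a + b) x = eval_mono a x * eval_mono b x"
  by (simp add: eval_mono_def lookup_add power_add prod.distrib)

lemma eval_mult: "eval_poly (p * q) x = eval_poly p x * eval_poly q x"
proof -
  have "p * q = (\<Sum>a\<in>Poly_Mapping.keys p. Poly_Mapping.single a (Poly_Mapping.lookup p a)) *
                (\<Sum>b\<in>Poly_Mapping.keys q. Poly_Mapping.single b (Poly_Mapping.lookup q b))"
    using poly_sum[of p] poly_sum[of q] by simp
  also have "\<dots> = (\<Sum>a\<in>Poly_Mapping.keys p. \<Sum>b\<in>Poly_Mapping.keys q.
       Poly_Mapping.single (a + b) (Poly_Mapping.lookup p a * Poly_Mapping.lookup q b))"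
    by (simp add: sum_product mult_single)
  finally have "eval_poly (p * q) x = (\<Sum>a\<in>Poly_Mapping.keys p. \<Sum>b\<in>Poly_Mapping.keys q.
       (Poly_Mapping.lookup p a * eval_mono a x) * (Poly_Mapping.lookup q b * eval_mono b x))"
    by (simp add: eval_sum eval_single eval_mono_add mult_ac)
  then show ?thesis by (simp add: eval_poly_def sum_product)
qed

lemma smult_eq: "smult_poly c p = Poly_Mapping.single 0 c * p"
  unfolding smult_poly_def by (rule mult_map_scale_conv_mult)

lemma eval_smult: "eval_poly (smult_poly c p) x = c * eval_poly p x"
  by (simp add: smult_eq eval_mult eval_single)

lemma keys_smult: "(c::'a::field) \<noteq> 0 \<Longrightarrow> Poly_Mapping.keys (smult_poly c p) = Poly_Mapping.keys p"
  by (auto simp: smult_poly_def in_keys_iff map.rep_eq when_def)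

lemma lookup_smult: "Poly_Mapping.lookup (smult_poly (c::'a::field) p) m = c * Poly_Mapping.lookup p m"
  by (auto simp: smult_poly_def map.rep_eq when_def)

lemma shift_sum: "Poly_Mapping.single u c * g =
   (\<Sum>b\<in>Poly_Mapping.keys g. Poly_Mapping.single (u + b) (c * Poly_Mapping.lookup g b))"
proof -
  have "Poly_Mapping.single u c * g = Poly_Mapping.single u c *
     (\<Sum>b\<in>Poly_Mapping.keys g. Poly_Mapping.single b (Poly_Mapping.lookup g b))"
    using poly_sum[of g] by simp
  then show ?thesis by (simp add: sum_distrib_left mult_single)
qed

lemma keys_shift: "Poly_Mapping.keys (Poly_Mapping.single u c * g) \<subseteq> (\<lambda>b. u + b) ` Poly_Mapping.keys g"
  using keys_mult[of "Poly_Mapping.single u c" g] by (auto split: if_splits)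

lemma lookup_shift: "Poly_Mapping.lookup (Poly_Mapping.single (u::'v monomial) c * g) (u + m) = c * Poly_Mapping.lookup g m"
proof -
  have "Poly_Mapping.lookup (Poly_Mapping.single (u::'v monomial) c * g) (u + m)
     = (\<Sum>b\<in>Poly_Mapping.keys g. if b = m then c * Poly_Mapping.lookup g b else 0)"
    unfolding shift_sum by (simp add: lookup_sum lookup_single when_def)
  also have "\<dots> = c * Poly_Mapping.lookup g m" by (simp add: sum.delta in_keys_iff)
  finally show ?thesis .
qed


lemma dickson:
  fixes f :: "nat \<Rightarrow> ('v::finite \<Rightarrow>\<^sub>0 nat)"
  shows "\<exists>i j. i < j \<and> (\<forall>v. Poly_Mapping.lookup (f i) v \<le> Poly_Mapping.lookup (f j) v)"
proof -
  obtain enc :: "'v set \<Rightarrow> nat" and n where enc: "enc ` UNIV = {i. i < n}" "inj enc"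
    using finite_imp_inj_to_nat_seg[of "UNIV :: 'v set set"] by auto
  define S where "S i j = {v. Poly_Mapping.lookup (f i) v \<le> Poly_Mapping.lookup (f j) v}" for i j
  define col where "col X = enc (S (Min X) (Max X))" for X :: "nat set"
  have "\<forall>x\<in>UNIV. \<forall>y\<in>UNIV. x \<noteq> y \<longrightarrow> col {x, y} < n" using enc(1) unfolding col_def by auto
  from Ramsey2[OF infinite_UNIV_nat this] obtain Y t where Y: "infinite Y" "t < n"
     "\<forall>x\<in>Y. \<forall>y\<in>Y. x \<noteq> y \<longrightarrow> col {x, y} = t" by blast
  have colxy: "enc (S x y) = t" if "x \<in> Y" "y \<in> Y" "x < y" for x y
  proof -
    have "col {x, y} = t" using Y(3) that by auto
    moreover have "Min {x, y} = x" "Max {x, y} = y" using that(3) by auto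
    ultimately show ?thesis by (simp add: col_def)
  qed
  have unb: "\<forall>m. \<exists>k>m. k \<in> Y" using Y(1) by (simp add: infinite_nat_iff_unbounded)
  obtain x y where xy: "x \<in> Y" "y \<in> Y" "x < y" using unb by blast
  show ?thesis
  proof (cases "S x y = UNIV")
    case True then show ?thesis using xy(3) unfolding S_def by blast
  next
    case False
    then obtain v where v: "v \<notin> S x y" by blast
    have dec: "Poly_Mapping.lookup (f b) v < Poly_Mapping.lookup (f a) v" if "a \<in> Y" "b \<in> Y" "a < b" for a b
    proof -
      have "enc (S a b) = enc (S x y)" using colxy[OF that] colxy[OF xy] by simp
      then have "S a b = S x y" using enc(2) by (simp add: inj_eq)
      then have "v \<notin> S a b" using v by simp
      then show ?thesis unfolding S_def by simp
    qed
    obtain a0 where a0: "a0 \<in> Y" "\<forall>a. a \<in> Y \<longrightarrow> Poly_Mapping.lookup (f a0) v \<le> Poly_Mapping.lookup (f a) v"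
      using ex_has_least_nat[of "\<lambda>a. a \<in> Y" x "\<lambda>a. Poly_Mapping.lookup (f a) v"] xy(1) by blast
    obtain b where "b > a0" "b \<in> Y" using unb by blast
    then show ?thesis using dec[OF a0(1), of b] a0(2) by force
  qed
qed

lemma to_wf:
  assumes to: "term_order (le :: 'v::finite monomial \<Rightarrow> _)"
  shows "wf {(a, b). le a b \<and> a \<noteq> b}"
proof (rule ccontr)
  assume "\<not> wf {(a, b). le a b \<and> a \<noteq> b}"
  then obtain f where f: "\<forall>i. (f (Suc i), f i) \<in> {(a, b). le a b \<and> a \<noteq> b}"
    using wf_iff_no_infinite_down_chain by blast
  have dec: "i < j \<Longrightarrow> le (f j) (f i) \<and> f j \<noteq> f i" for i j
  proof (induction j)
    case 0 then show ?case by simp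
  next
    case (Suc j)
    show ?case
    proof (cases "i = j")
      case True then show ?thesis using f by auto
    next
      case False
      then have ij: "le (f j) (f i)" "f j \<noteq> f i" using Suc by auto
      have s: "le (f (Suc j)) (f j)" using f by auto
      have "le (f (Suc j)) (f i)" using to_trans[OF to s ij(1)] .
      moreover have "f (Suc j) \<noteq> f i"
        using s ij to_antisym[OF to] by metis
      ultimately show ?thesis by simp
    qed
  qed
  obtain i j where ij: "i < j" "\<forall>v. Poly_Mapping.lookup (f i) v \<le> Poly_Mapping.lookup (f j) v"
    using dickson by blast
  then have "le (f i) (f j)" using mono_dvd_le(1)[OF to] unfolding mono_dvd_def by blast
  then show False using dec[OF ij(1)] to_antisym[OF to] by metis
qed

lemma eval_one[simp]: "eval_poly 1 x = 1"
  by (metis single_one eval_single eval_mono_zero mult_1)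

lemma eval_prod: "eval_poly (\<Prod>i\<in>A. f i) x = (\<Prod>i\<in>A. eval_poly (f i) x)"
  by (induction A rule: infinite_finite_induct) (auto simp: eval_mult)

lemma eval_mono_var: "eval_mono (Poly_Mapping.single v 1) x = x v"
proof -
  have "\<And>w. x w ^ Poly_Mapping.lookup (Poly_Mapping.single v 1) w = (if w = v then x w else 1)"
    by (auto simp: lookup_single when_def)
  then show ?thesis by (simp add: eval_mono_def)
qed

lemma separating:
  assumes "finite F" "h \<notin> F"
  shows "\<exists>p::('v::finite,'a::field) mpoly. p \<in> vanishing_ideal F \<and> eval_poly p h \<noteq> 0"
proof -
  have "\<forall>f\<in>F. \<exists>v. f v \<noteq> h v" using assms(2) by (metis ext)
  then obtain w where w: "\<forall>f\<in>F. f (w f) \<noteq> h (w f)" by metis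
  define lin :: "('v \<Rightarrow> 'a) \<Rightarrow> ('v,'a) mpoly" where
    "lin f = Poly_Mapping.single (Poly_Mapping.single (w f) 1) 1 - Poly_Mapping.single 0 (f (w f))" for f
  have el: "eval_poly (lin f) x = x (w f) - f (w f)" for f x
     unfolding lin_def eval_diff eval_single eval_mono_var by simp
  have ep: "eval_poly (\<Prod>f\<in>F. lin f) x = (\<Prod>f\<in>F. x (w f) - f (w f))" for x
    by (simp add: eval_prod el)
  show ?thesis
  proof (intro exI conjI)
    show "(\<Prod>f\<in>F. lin f) \<in> vanishing_ideal F"
      unfolding vanishing_ideal_def using assms(1) by (auto simp: ep)
    show "eval_poly (\<Prod>f\<in>F. lin f) h \<noteq> 0"
      unfolding ep using assms(1) w by auto
  qed
qed

lemma key: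
  assumes to: "term_order le" and gb: "is_groebner_basis le G (vanishing_ideal F)"
    and "q \<in> vanishing_ideal F" "q \<noteq> 0" "eval_poly q h \<noteq> (0::'a::field)"
  shows "\<exists>g\<in>G. eval_poly g h \<noteq> 0 \<and> le (lm le g) (lm le (q :: ('v::finite, 'a) mpoly))"
proof -
  define P where "P m \<longleftrightarrow> (\<forall>q::('v,'a) mpoly. lm le q = m \<longrightarrow> q \<in> vanishing_ideal F \<longrightarrow> q \<noteq> 0 \<longrightarrow>
     eval_poly q h \<noteq> 0 \<longrightarrow> (\<exists>g\<in>G. eval_poly g h \<noteq> 0 \<and> le (lm le g) (lm le q)))" for m
  have "P m" for m
  proof (rule wf_induct_rule[OF to_wf[OF to]])
    fix m
    assume less: "\<And>y. (y, m) \<in> {(a, b). le a b \<and> a \<noteq> b} \<Longrightarrow> P y"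
    show "P m" unfolding P_def
    proof (intro allI impI)
      fix q :: "('v,'a) mpoly"
      assume q: "lm le q = m" "q \<in> vanishing_ideal F" "q \<noteq> 0" "eval_poly q h \<noteq> 0"
      from gb q obtain g where g: "g \<in> G" "mono_dvd (lm le g) (lm le q)"
        unfolding is_groebner_basis_def by blast
      have gI: "g \<in> vanishing_ideal F" "g \<noteq> 0" using gb g(1) unfolding is_groebner_basis_def by auto
      define u where "u = lm le q - lm le g"
      have lq: "lm le q = lm le g + u" "le (lm le g) (lm le q)"
        using mono_dvd_le[OF to g(2)] u_def by auto
      show "\<exists>g\<in>G. eval_poly g h \<noteq> 0 \<and> le (lm le g) (lm le q)"
      proof (cases "eval_poly g h = 0")
        case False then show ?thesis using g(1) lq(2) by blast
      next
        case True
        define c where "c = Poly_Mapping.lookup q (lm le q) / Poly_Mapping.lookup g (lm le g)"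
        define q' where "q' = q - Poly_Mapping.single u c * g"
        have lcg: "Poly_Mapping.lookup g (lm le g) \<noteq> 0" using lm_in[OF to gI(2)] by (simp add: in_keys_iff)
        have ev: "eval_poly q' x = eval_poly q x - c * eval_mono u x * eval_poly g x" for x
          by (simp add: q'_def eval_diff eval_mult eval_single)
        have q'I: "q' \<in> vanishing_ideal F" using q(2) gI(1) ev unfolding vanishing_ideal_def by simp
        have q'h: "eval_poly q' h \<noteq> 0" using ev True q(4) by simp
        then have q'0: "q' \<noteq> 0" by auto
        have keys': "\<forall>m\<in>Poly_Mapping.keys q'. le m (lm le q)"
        proof
          fix m assume m: "m \<in> Poly_Mapping.keys q'"
          have "Poly_Mapping.keys q' \<subseteq> Poly_Mapping.keys q \<union> Poly_Mapping.keys (Poly_Mapping.single u c * g)"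
            unfolding q'_def by (rule keys_diff)
          then have "m \<in> Poly_Mapping.keys q \<or> m \<in> Poly_Mapping.keys (Poly_Mapping.single u c * g)"
            using m by blast
          then show "le m (lm le q)"
          proof
            assume "m \<in> Poly_Mapping.keys q" then show ?thesis by (rule lm_max[OF to])
          next
            assume "m \<in> Poly_Mapping.keys (Poly_Mapping.single u c * g)"
            then obtain b where b: "b \<in> Poly_Mapping.keys g" "m = u + b" using keys_shift by blast
            have "le (u + b) (u + lm le g)" using to_add[OF to lm_max[OF to b(1)]] .
            then show ?thesis using b lq(1) by (metis add.commute)
          qed
        qed
        have sh: "Poly_Mapping.lookup (Poly_Mapping.single u c * g) (lm le q) = c * Poly_Mapping.lookup g (lm le g)"
          using lookup_shift[of u c g "lm le g"] lq(1) by (metis add.commute)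
        have "Poly_Mapping.lookup q' (lm le q) = Poly_Mapping.lookup q (lm le q) - c * Poly_Mapping.lookup g (lm le g)"
          by (simp add: q'_def lookup_minus sh)
        also have "\<dots> = 0" using lcg by (simp add: c_def)
        finally have "Poly_Mapping.lookup q' (lm le q) = 0" .
        from lm_less[OF to q'0 keys' this] have lt: "le (lm le q') (lm le q)" "lm le q' \<noteq> lm le q" by auto
        have "P (lm le q')" using less lt q(1) by auto
        then obtain g'' where "g'' \<in> G" "eval_poly g'' h \<noteq> 0" "le (lm le g'') (lm le q')"
          using q'I q'0 q'h unfolding P_def by blast
        then show ?thesis using to_trans[OF to _ lt(1)] by blast
      qed
    qed
  qed
  then show ?thesis using assms(3-5) unfolding P_def by blast
qed

theorem mainTheorem5:
  fixes le :: "'v::finite monomial \<Rightarrow> 'v monomial \<Rightarrow> bool"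
    and F :: "('v \<Rightarrow> 'a::field) set"
    and h :: "'v \<Rightarrow> 'a"
    and G :: "('v, 'a) mpoly set"
  assumes "term_order le"
    and "finite F"
    and "h \<notin> F"
    and "is_reduced_groebner_basis le G (vanishing_ideal F)"
  shows "(\<exists>g\<in>G. eval_poly g h \<noteq> 0 \<and>
            (\<forall>g'\<in>G. eval_poly g' h \<noteq> 0 \<longrightarrow> le (lm le g) (lm le g'))) \<and>
         (\<forall>g\<in>G. eval_poly g h \<noteq> 0 \<and>
            (\<forall>g'\<in>G. eval_poly g' h \<noteq> 0 \<longrightarrow> le (lm le g) (lm le g')) \<longrightarrow>
            (\<forall>t\<in>F \<union> {h}. (if t = h then 1 else 0) = eval_poly (smult_poly (1 / eval_poly g h) g) t) \<and>
            Poly_Mapping.keys (smult_poly (1 / eval_poly g h) g) \<subseteq> standard_monomials le (F \<union> {h}) \<and>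
            (\<forall>q. Poly_Mapping.keys q \<subseteq> standard_monomials le (F \<union> {h}) \<and>
                 (\<forall>t\<in>F \<union> {h}. eval_poly q t = (if t = h then 1 else 0)) \<longrightarrow>
                 q = smult_poly (1 / eval_poly g h) g))"
proof -
  note to = assms(1)
  have gb: "is_groebner_basis le G (vanishing_ideal F)" using assms(4) unfolding is_reduced_groebner_basis_def by blast
  have GI: "g \<in> vanishing_ideal F" "g \<noteq> 0" if "g \<in> G" for g
    using gb that unfolding is_groebner_basis_def by auto
  have Gfin: "finite G" using gb unfolding is_groebner_basis_def by blast
  have lc1: "Poly_Mapping.lookup g (lm le g) = 1" if "g \<in> G" for g
    using assms(4) that unfolding is_reduced_groebner_basis_def lc_def by blast
  have red: "\<not> mono_dvd (lm le g') m" if "g \<in> G" "g' \<in> G" "g \<noteq> g'" "m \<in> Poly_Mapping.keys g" for g g' m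
    using assms(4) that unfolding is_reduced_groebner_basis_def by blast
  have FT: "vanishing_ideal (F \<union> {h}) \<subseteq> vanishing_ideal F" unfolding vanishing_ideal_def by auto
  show ?thesis
  proof
    obtain p :: "('v,'a) mpoly" where p: "p \<in> vanishing_ideal F" "eval_poly p h \<noteq> 0"
      using separating[OF assms(2,3)] by blast
    then have "p \<noteq> 0" by auto
    from key[OF to gb p(1) this p(2)] obtain g0 where g0: "g0 \<in> G" "eval_poly g0 h \<noteq> 0" by blast
    let ?S = "{g\<in>G. eval_poly g h \<noteq> 0}"
    have fin: "finite ?S" and ne: "?S \<noteq> {}" using Gfin g0 by auto
    have "\<exists>x\<in>?S. \<forall>y\<in>?S. (\<lambda>a b. le (lm le b) (lm le a)) y x"
      apply (rule finite_max_ex[OF fin ne])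
      using to_total[OF to] apply blast
      using to_trans[OF to] apply blast
      done
    then obtain x where "x \<in> ?S" "\<forall>y\<in>?S. le (lm le x) (lm le y)" by auto
    then show "\<exists>g\<in>G. eval_poly g h \<noteq> 0 \<and> (\<forall>g'\<in>G. eval_poly g' h \<noteq> 0 \<longrightarrow> le (lm le g) (lm le g'))" by auto
  next
    show "\<forall>g\<in>G. eval_poly g h \<noteq> 0 \<and> (\<forall>g'\<in>G. eval_poly g' h \<noteq> 0 \<longrightarrow> le (lm le g) (lm le g')) \<longrightarrow>
            (\<forall>t\<in>F \<union> {h}. (if t = h then 1 else 0) = eval_poly (smult_poly (1 / eval_poly g h) g) t) \<and>
            Poly_Mapping.keys (smult_poly (1 / eval_poly g h) g) \<subseteq> standard_monomials le (F \<union> {h}) \<and>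
            (\<forall>q. Poly_Mapping.keys q \<subseteq> standard_monomials le (F \<union> {h}) \<and>
                 (\<forall>t\<in>F \<union> {h}. eval_poly q t = (if t = h then 1 else 0)) \<longrightarrow>
                 q = smult_poly (1 / eval_poly g h) g)"
    proof (intro ballI impI)
      fix g assume gG: "g \<in> G"
      assume "eval_poly g h \<noteq> 0 \<and> (\<forall>g'\<in>G. eval_poly g' h \<noteq> 0 \<longrightarrow> le (lm le g) (lm le g'))"
      then have gh: "eval_poly g h \<noteq> 0" and mn: "\<And>g'. g' \<in> G \<Longrightarrow> eval_poly g' h \<noteq> 0 \<Longrightarrow> le (lm le g) (lm le g')"
        by auto
      define c where "c = 1 / eval_poly g h"
      have c0: "c \<noteq> 0" using gh by (simp add: c_def)
      have chi: "\<forall>t\<in>F \<union> {h}. (if t = h then 1 else 0) = eval_poly (smult_poly c g) t"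
      proof
        fix t assume t: "t \<in> F \<union> {h}"
        show "(if t = h then 1 else 0) = eval_poly (smult_poly c g) t"
        proof (cases "t = h")
          case True then show ?thesis using gh by (simp add: eval_smult c_def)
        next
          case False then have "t \<in> F" using t by auto
          then show ?thesis using GI(1)[OF gG] False by (simp add: eval_smult vanishing_ideal_def)
        qed
      qed
      have sm: "Poly_Mapping.keys g \<subseteq> standard_monomials le (F \<union> {h})"
      proof
        fix m assume mg: "m \<in> Poly_Mapping.keys g"
        show "m \<in> standard_monomials le (F \<union> {h})"
        proof (rule ccontr)
          assume "m \<notin> standard_monomials le (F \<union> {h})"
          then obtain p where p: "p \<in> vanishing_ideal (F \<union> {h})" "p \<noteq> 0" "lm le p = m"
            unfolding standard_monomials_def by blast
          have pF: "p \<in> vanishing_ideal F" using p(1) FT by blast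
          have ph: "eval_poly p h = 0" using p(1) unfolding vanishing_ideal_def by auto
          obtain g' where g': "g' \<in> G" "mono_dvd (lm le g') (lm le p)"
            using gb pF p(2) unfolding is_groebner_basis_def by blast
          have "g' = g" using red[OF gG g'(1) _ mg] g'(2) p(3) by blast
          then have "le (lm le g) m" using mono_dvd_le(1)[OF to] g'(2) p(3) by blast
          moreover have "le m (lm le g)" using lm_max[OF to mg] .
          ultimately have mlm: "m = lm le g" using to_antisym[OF to] by blast
          define d where "d = Poly_Mapping.lookup p (lm le p)"
          have d0: "d \<noteq> 0" using lm_in[OF to p(2)] by (simp add: d_def in_keys_iff)
          define q where "q = g - smult_poly (1 / d) p"
          have ev: "eval_poly q x = eval_poly g x - (1 / d) * eval_poly p x" for x
            by (simp add: q_def eval_diff eval_smult)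
          have qI: "q \<in> vanishing_ideal F" using pF GI(1)[OF gG] ev unfolding vanishing_ideal_def by simp
          have qh: "eval_poly q h \<noteq> 0" using ev ph gh by simp
          then have q0: "q \<noteq> 0" by auto
          have kq: "Poly_Mapping.keys q \<subseteq> Poly_Mapping.keys g \<union> Poly_Mapping.keys p"
            using keys_diff[of g "smult_poly (1 / d) p"] keys_smult[of "1/d" p] d0 unfolding q_def by simp
          have keys': "\<forall>m'\<in>Poly_Mapping.keys q. le m' (lm le g)"
          proof
            fix m' assume "m' \<in> Poly_Mapping.keys q"
            then have "m' \<in> Poly_Mapping.keys g \<or> m' \<in> Poly_Mapping.keys p" using kq by blast
            then show "le m' (lm le g)" using lm_max[OF to] p(3) mlm by metis
          qed
          have "Poly_Mapping.lookup q (lm le g) = 1 - (1 / d) * d"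
            using lc1[OF gG] p(3) mlm by (simp add: q_def lookup_minus lookup_smult d_def)
          also have "\<dots> = 0" using d0 by simp
          finally have lt: "le (lm le q) (lm le g)" "lm le q \<noteq> lm le g"
            using lm_less[OF to q0 keys'] by auto
          from key[OF to gb qI q0 qh] obtain g'' where "g'' \<in> G" "eval_poly g'' h \<noteq> 0" "le (lm le g'') (lm le q)"
            by blast
          then have "le (lm le g) (lm le q)" using mn to_trans[OF to] by blast
          then show False using lt to_antisym[OF to] by blast
        qed
      qed
      have ksm: "Poly_Mapping.keys (smult_poly c g) \<subseteq> standard_monomials le (F \<union> {h})"
        using sm keys_smult[OF c0, of g] by (simp only:)
      have uniq: "q = smult_poly c g" if q: "Poly_Mapping.keys q \<subseteq> standard_monomials le (F \<union> {h})"
        "\<forall>t\<in>F \<union> {h}. eval_poly q t = (if t = h then 1 else 0)" for q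
      proof (rule ccontr)
        assume ne: "q \<noteq> smult_poly c g"
        define r where "r = q - smult_poly c g"
        have r0: "r \<noteq> 0" using ne by (simp add: r_def)
        have rI: "r \<in> vanishing_ideal (F \<union> {h})"
          unfolding vanishing_ideal_def using q(2) chi by (simp add: r_def eval_diff)
        have "lm le r \<in> standard_monomials le (F \<union> {h})"
          using lm_in[OF to r0] keys_diff[of q "smult_poly c g"] q(1) ksm unfolding r_def by blast
        then show False using rI r0 unfolding standard_monomials_def by blast
      qed
      show "(\<forall>t\<in>F \<union> {h}. (if t = h then 1 else 0) = eval_poly (smult_poly (1 / eval_poly g h) g) t) \<and>
            Poly_Mapping.keys (smult_poly (1 / eval_poly g h) g) \<subseteq> standard_monomials le (F \<union> {h}) \<and>
            (\<forall>q. Poly_Mapping.keys q \<subseteq> standard_monomials le (F \<union> {h}) \<and>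
                 (\<forall>t\<in>F \<union> {h}. eval_poly q t = (if t = h then 1 else 0)) \<longrightarrow>
                 q = smult_poly (1 / eval_poly g h) g)"
        using chi ksm uniq unfolding c_def by blast
    qed
  qed
qed

end
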